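(* Fix $\omega>0$ and $\alpha_0,\alpha_1\in\mathbb C$, and let $\alpha(t)=(1-t)\alpha_0+t\alpha_1$ for $t\in[0,1]$. Assume $\omega^2>|\alpha(t)|^2$ for all $t\in[0,1]$. Let $$\xi_-(t)=\frac{\omega-\sqrt{\omega^2-|\alpha(t)|^2}}{\alpha(t)}$$ (understood as $\frac{\overline{\alpha(t)}}{\omega+\sqrt{\omega^2-|\alpha(t)|^2}}$, which is also defined when $\alpha(t)=0$). Then the curve $t\mapsto\xi_-(t)$, $t\in[0,1]$, traces a segment of a hyperbolic line in the Poincaré disk $D=\{|z|<1\}$.
   Context: A hyperbolic line in the Poincaré disk model $D$ is the intersection of $D$ with a Euclidean circle orthogonal to the unit circle, or with a straight line through the origin (a diameter). The point $\xi_-(t)$ lies in $D$ and is the parameter of the ground state of $H(t)=\omega a^*a+\frac{\alpha(t)}{2}a^2+\frac{\overline{\alpha(t)}}{2}{a^*}^2$, i.e. the ground state is annihilated by $a+\xi_-(t)a^*$. *)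

theory Defs
  imports "HOL-Analysis.Analysis"
begin

definition poincare_disk :: "complex set" where
  "poincare_disk = ball 0 1"

text \<open>Hyperbolic lines: intersection of the disk with a Euclidean circle orthogonal
  to the unit circle (centre c, radius r > 0 with |c|^2 = 1 + r^2), or with a
  straight line through the origin (a diameter).\<close>
definition hyperbolic_line :: "complex set \<Rightarrow> bool" where
  "hyperbolic_line L \<longleftrightarrow>
     (\<exists>c r. r > 0 \<and> (norm c)^2 = 1 + r^2 \<and> L = poincare_disk \<inter> sphere c r) \<or>
     (\<exists>u. u \<noteq> 0 \<and> L = poincare_disk \<inter> {z. \<exists>s::real. z = of_real s * u})"

text \<open>Ground-state parameter, in the form that is also defined when alpha = 0.\<close>
definition xi_minus :: "real \<Rightarrow> complex \<Rightarrow> complex" where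
  "xi_minus \<omega> a = cnj a / of_real (\<omega> + sqrt (\<omega>^2 - (norm a)^2))"

end

theory Submission
  imports Defs
begin

lemma xi_props:
  fixes \<omega> :: real and a :: complex
  assumes w: "\<omega> > 0" and h: "(norm a)^2 < \<omega>^2"
  shows "norm (xi_minus \<omega> a) < 1"
    and "2 * of_real \<omega> * xi_minus \<omega> a = cnj a * of_real (1 + (norm (xi_minus \<omega> a))^2)"
proof -
  define s where "s = sqrt (\<omega>^2 - (norm a)^2)"
  have s0: "s > 0" using h by (simp add: s_def)
  have s2: "s^2 = \<omega>^2 - (norm a)^2" using h by (simp add: s_def)
  have xi: "xi_minus \<omega> a = cnj a / of_real (\<omega> + s)" by (simp add: xi_minus_def s_def)
  have ws: "\<omega> + s > 0" using w s0 by simp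
  have n2: "(norm (xi_minus \<omega> a))^2 = (norm a)^2 / (\<omega> + s)^2"
    proof -
    have "norm (complex_of_real (\<omega> + s)) = \<omega> + s" using ws by (simp only: norm_of_real)
    then show ?thesis by (simp only: xi norm_divide power_divide complex_mod_cnj)
  qed
  have na: "(norm a)^2 = (\<omega> - s) * (\<omega> + s)" using s2 by (simp add: algebra_simps power2_eq_square)
  have n2': "(norm (xi_minus \<omega> a))^2 = (\<omega> - s) / (\<omega> + s)"
    unfolding n2 na using ws by (simp add: power2_eq_square)
  have "(norm (xi_minus \<omega> a))^2 < 1" using ws s0 by (simp add: n2' divide_less_eq)
  then show "norm (xi_minus \<omega> a) < 1"
    by (metis abs_norm_cancel abs_square_less_1)
  have e: "1 + (norm (xi_minus \<omega> a))^2 = 2 * \<omega> / (\<omega> + s)"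
    using ws by (simp add: n2' field_simps)
  show "2 * of_real \<omega> * xi_minus \<omega> a = cnj a * of_real (1 + (norm (xi_minus \<omega> a))^2)"
  proof -
    have nz: "complex_of_real \<omega> + complex_of_real s \<noteq> 0"
      using ws by (metis of_real_add of_real_eq_0_iff less_irrefl)
    have "cnj a * of_real (1 + (norm (xi_minus \<omega> a))^2) = cnj a * of_real (2 * \<omega> / (\<omega> + s))"
      by (simp only: e)
    also have "\<dots> = 2 * of_real \<omega> * xi_minus \<omega> a"
      using nz by (simp add: xi field_simps)
    finally show ?thesis by simp
  qed
qed

lemma reR: "Re (z * complex_of_real r) = Re z * r" by simp

theorem theorem3:
  fixes \<omega> :: real and \<alpha>0 \<alpha>1 :: complex
  assumes "\<omega> > 0"
    and "\<forall>t\<in>{0..1::real}. \<omega>^2 > (norm ((1 - of_real t) * \<alpha>0 + of_real t * \<alpha>1))^2"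
  shows "\<exists>L. hyperbolic_line L \<and>
           (\<lambda>t. xi_minus \<omega> ((1 - of_real t) * \<alpha>0 + of_real t * \<alpha>1)) ` {0..1} \<subseteq> L"
proof -
  define b0 where "b0 = cnj \<alpha>0"
  define b1 where "b1 = cnj \<alpha>1"
  define n where "n = (if b1 \<noteq> b0 then \<i> * (b1 - b0) else 1)"
  have n0: "n \<noteq> 0" by (simp add: n_def)
  have nb: "Re (cnj n * (b1 - b0)) = 0"
    by (simp add: n_def algebra_simps)
  define d where "d = Re (cnj n * b0)"
  have line: "Re (cnj n * cnj ((1 - of_real t) * \<alpha>0 + of_real t * \<alpha>1)) = d" for t :: real
  proof -
    have eq: "cnj ((1 - of_real t) * \<alpha>0 + of_real t * \<alpha>1) = b0 + of_real t * (b1 - b0)"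
      by (simp add: b0_def b1_def algebra_simps)
    have "cnj n * cnj ((1 - of_real t) * \<alpha>0 + of_real t * \<alpha>1) = cnj n * b0 + of_real t * (cnj n * (b1 - b0))"
      by (subst eq) (simp add: algebra_simps)
    then show ?thesis using nb by (simp add: d_def)
  qed
  define D where "D = d / (2 * \<omega>)"
  have key: "norm \<xi> < 1 \<and> Re (cnj n * \<xi>) = D * (1 + (norm \<xi>)^2)"
    if "\<xi> \<in> (\<lambda>t. xi_minus \<omega> ((1 - of_real t) * \<alpha>0 + of_real t * \<alpha>1)) ` {0..1}" for \<xi>
  proof -
    from that obtain t where t: "t \<in> {0..1}" and xt: "\<xi> = xi_minus \<omega> ((1 - of_real t) * \<alpha>0 + of_real t * \<alpha>1)"
      by auto
    define a where "a = (1 - of_real t) * \<alpha>0 + of_real t * \<alpha>1"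
    have h: "(norm a)^2 < \<omega>^2" using assms(2) t by (simp add: a_def)
    have x: "\<xi> = xi_minus \<omega> a" by (simp add: xt a_def)
    note p = xi_props[OF assms(1) h]
    have "2 * of_real \<omega> * (cnj n * \<xi>) = (cnj n * cnj a) * of_real (1 + (norm \<xi>)^2)"
      using p(2) x by (metis mult.assoc mult.left_commute)
    then have "Re (2 * of_real \<omega> * (cnj n * \<xi>)) = Re ((cnj n * cnj a) * of_real (1 + (norm \<xi>)^2))"
      by (rule arg_cong)
    moreover have "Re (2 * of_real \<omega> * (cnj n * \<xi>)) = 2 * \<omega> * Re (cnj n * \<xi>)" by simp
    moreover have "Re ((cnj n * cnj a) * of_real (1 + (norm \<xi>)^2)) = Re (cnj n * cnj a) * (1 + (norm \<xi>)^2)"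
      by (rule reR)
    moreover have "Re (cnj n * cnj a) = d" using line[of t] by (simp only: a_def)
    ultimately have "2 * \<omega> * Re (cnj n * \<xi>) = d * (1 + (norm \<xi>)^2)"
      by simp
    then have "Re (cnj n * \<xi>) = D * (1 + (norm \<xi>)^2)"
      using assms(1) by (simp add: D_def field_simps)
    then show ?thesis using p(1) x by simp
  qed
  show ?thesis
  proof (cases "D = 0")
    case True
    define L where "L = poincare_disk \<inter> {z. \<exists>s::real. z = of_real s * (\<i> * n)}"
    have "hyperbolic_line L" unfolding hyperbolic_line_def L_def
      by (rule disjI2, rule exI[of _ "\<i> * n"]) (simp add: n0)
    moreover have "(\<lambda>t. xi_minus \<omega> ((1 - of_real t) * \<alpha>0 + of_real t * \<alpha>1)) ` {0..1} \<subseteq> L"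
    proof
      fix \<xi> assume "\<xi> \<in> (\<lambda>t. xi_minus \<omega> ((1 - of_real t) * \<alpha>0 + of_real t * \<alpha>1)) ` {0..1}"
      from key[OF this] True have k: "norm \<xi> < 1" "Re (cnj n * \<xi>) = 0" by auto
      have "Im (\<xi> / (\<i> * n)) = 0"
      proof -
        have "Im \<xi> * Re (\<i> * n) - Re \<xi> * Im (\<i> * n) = - (Im \<xi> * Im n + Re \<xi> * Re n)" by simp
        also have "\<dots> = 0" using k(2) by (simp add: mult.commute)
        finally show ?thesis by (simp only: Im_divide' div_0)
      qed
      then have q: "\<xi> / (\<i> * n) = of_real (Re (\<xi> / (\<i> * n)))" by (simp add: complex_eq_iff)
      have "\<i> * n \<noteq> 0" using n0 by simp
      then have "\<xi> = (\<xi> / (\<i> * n)) * (\<i> * n)" by simp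
      then have "\<xi> = of_real (Re (\<xi> / (\<i> * n))) * (\<i> * n)" using q by simp
      then show "\<xi> \<in> L" using k(1) unfolding L_def poincare_disk_def by auto
    qed
    ultimately show ?thesis by blast
  next
    case False
    define c where "c = n / of_real (2 * D)"
    have circ: "norm \<xi> < 1 \<and> (norm (\<xi> - c))^2 = (norm c)^2 - 1"
      if "\<xi> \<in> (\<lambda>t. xi_minus \<omega> ((1 - of_real t) * \<alpha>0 + of_real t * \<alpha>1)) ` {0..1}" for \<xi>
    proof -
      from key[OF that] have k: "norm \<xi> < 1" "Re (cnj n * \<xi>) = D * (1 + (norm \<xi>)^2)" by auto
      have Rc: "Re c = Re n / (2*D)" "Im c = Im n / (2*D)" by (simp_all add: c_def)
      have "(norm (\<xi> - c))^2 = (Re \<xi> - Re c)^2 + (Im \<xi> - Im c)^2" by (simp add: cmod_power2)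
      also have "\<dots> = ((Re \<xi>)^2 + (Im \<xi>)^2) - 2 * (Re \<xi> * Re c + Im \<xi> * Im c) + ((Re c)^2 + (Im c)^2)"
        by (simp add: power2_eq_square algebra_simps)
      also have "Re \<xi> * Re c + Im \<xi> * Im c = Re (cnj n * \<xi>) / (2 * D)"
        by (simp add: Rc add_divide_distrib mult.commute)
      also have "\<dots> = (1 + (norm \<xi>)^2) / 2" using k(2) False by simp
      also have "(Re \<xi>)^2 + (Im \<xi>)^2 = (norm \<xi>)^2" by (simp add: cmod_power2)
      also have "(Re c)^2 + (Im c)^2 = (norm c)^2" by (simp add: cmod_power2)
      also have "(norm \<xi>)^2 - 2 * ((1 + (norm \<xi>)^2) / 2) + (norm c)^2 = (norm c)^2 - 1" by (simp add: field_simps)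
      finally show ?thesis using k(1) by simp
    qed
    define \<xi>0 where "\<xi>0 = xi_minus \<omega> ((1 - of_real 0) * \<alpha>0 + of_real 0 * \<alpha>1)"
    have "\<xi>0 \<in> (\<lambda>t. xi_minus \<omega> ((1 - of_real t) * \<alpha>0 + of_real t * \<alpha>1)) ` {0..1}"
      unfolding \<xi>0_def by (rule imageI) simp
    from circ[OF this] have c0: "norm \<xi>0 < 1" "(norm (\<xi>0 - c))^2 = (norm c)^2 - 1" by auto
    have rpos: "(norm c)^2 - 1 > 0"
    proof (rule ccontr)
      assume "\<not> ?thesis"
      then have "(norm (\<xi>0 - c))^2 = 0" using c0(2) by (smt (verit) zero_le_power2)
      then have "\<xi>0 = c" by simp
      then have "(norm c)^2 < 1" using c0(1) by (simp add: abs_square_less_1)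
      then show False using \<open>(norm (\<xi>0 - c))^2 = 0\<close> c0(2) by simp
    qed
    define r where "r = sqrt ((norm c)^2 - 1)"
    have r0: "r > 0" using rpos by (simp add: r_def)
    have r2: "(norm c)^2 = 1 + r^2" using rpos by (simp add: r_def)
    define L where "L = poincare_disk \<inter> sphere c r"
    have "hyperbolic_line L" unfolding hyperbolic_line_def L_def using r0 r2 by blast
    moreover have "(\<lambda>t. xi_minus \<omega> ((1 - of_real t) * \<alpha>0 + of_real t * \<alpha>1)) ` {0..1} \<subseteq> L"
    proof
      fix \<xi> assume "\<xi> \<in> (\<lambda>t. xi_minus \<omega> ((1 - of_real t) * \<alpha>0 + of_real t * \<alpha>1)) ` {0..1}"
      from circ[OF this] have k: "norm \<xi> < 1" "(norm (\<xi> - c))^2 = r^2" using r2 by auto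
      have "norm (\<xi> - c) = r" using k(2) r0
        by (metis norm_ge_zero power2_eq_imp_eq less_imp_le)
      then show "\<xi> \<in> L" using k(1) unfolding L_def poincare_disk_def
        by (simp add: dist_norm norm_minus_commute)
    qed
    ultimately show ?thesis by blast
  qed
qed

end
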